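(* Let $\Omega=\Omega_1\setminus\overline{\Omega_2}$ be a doubly connected domain with $C^2$ boundary, let $d_1(w)=\operatorname{dist}(w,\partial\Omega_1)$, let $\kappa_0=\operatorname{ess\,sup}\{|\kappa_\zeta|:\zeta\in\partial\Omega_1\}$ where $\kappa_\zeta$ is the curvature of $\partial\Omega_1$ at $\zeta$, let $0<\mu<\kappa_0^{-1}$ and $\Gamma_\mu=\{w\in\Omega: d_1(w)\le\mu\}$. Let $D$ be a planar domain and $w\colon D\to\Omega$ a $(K,K')$-quasiconformal mapping, and set $\chi(z)=-d_1(w(z))$. Then for (almost) every $z\in w^{-1}(\Gamma_\mu)$ at which $w$ is differentiable, $$|\nabla\chi(z)|\le|Dw(z)|\le 2K|\nabla\chi(z)|+\sqrt{K'}.$$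
   Context: $|Dw(z)|=\max\{|Dw(z)h|:|h|=1\}=|w_z|+|w_{\bar z}|$ is the operator norm of the differential, $\|Dw\|^2=|w_x|^2+|w_y|^2=2|w_z|^2+2|w_{\bar z}|^2$, and $J(z,w)=|w_z|^2-|w_{\bar z}|^2$. A sense-preserving ACL mapping $w$ between planar domains is $(K,K')$-quasiconformal ($K\ge1$, $K'\ge0$) if $\|Dw\|^2\le 2KJ(z,w)+K'$ almost everywhere. On $\Gamma_\mu$ the function $d_1$ is $C^2$ with $|\nabla d_1|=1$. *)

theory Defs
  imports "HOL-Analysis.Analysis"
begin

definition abs_cont_on :: "(real \<Rightarrow> 'b::real_normed_vector) \<Rightarrow> real \<Rightarrow> real \<Rightarrow> bool" where
  "abs_cont_on f a b \<longleftrightarrow>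
     (\<forall>\<epsilon>>0. \<exists>\<delta>>0. \<forall>S. finite S \<and> (\<forall>(u,v)\<in>S. a \<le> u \<and> u < v \<and> v \<le> b)
        \<and> (\<forall>p\<in>S. \<forall>q\<in>S. p \<noteq> q \<longrightarrow> {fst p<..<snd p} \<inter> {fst q<..<snd q} = {})
        \<and> (\<Sum>(u,v)\<in>S. v - u) < \<delta>
        \<longrightarrow> (\<Sum>(u,v)\<in>S. norm (f v - f u)) < \<epsilon>)"

definition ACL_on :: "complex set \<Rightarrow> (complex \<Rightarrow> complex) \<Rightarrow> bool" where
  "ACL_on D w \<longleftrightarrow> continuous_on D w \<and>
     (\<forall>a b. cbox a b \<subseteq> D \<longrightarrow>
        (AE y in lebesgue. y \<in> {Im a..Im b} \<longrightarrow>
            abs_cont_on (\<lambda>x. w (Complex x y)) (Re a) (Re b)) \<and>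
        (AE x in lebesgue. x \<in> {Re a..Re b} \<longrightarrow>
            abs_cont_on (\<lambda>y. w (Complex x y)) (Im a) (Im b)))"

definition partials_at :: "(complex \<Rightarrow> complex) \<Rightarrow> complex \<Rightarrow> complex \<Rightarrow> complex \<Rightarrow> bool" where
  "partials_at w z wx wy \<longleftrightarrow>
     ((\<lambda>t. w (z + of_real t)) has_vector_derivative wx) (at 0) \<and>
     ((\<lambda>t. w (z + \<i> * of_real t)) has_vector_derivative wy) (at 0)"

text \<open>Jacobian J = |w_z|^2 - |w_zbar|^2 = Re w_x Im w_y - Im w_x Re w_y.\<close>
definition jac :: "complex \<Rightarrow> complex \<Rightarrow> real" where
  "jac wx wy = Im (cnj wx * wy)"

text \<open>(K,K')-quasiconformal: sense-preserving (J \<ge> 0 a.e.) ACL mapping with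
  ||Dw||^2 = |w_x|^2 + |w_y|^2 \<le> 2 K J + K' a.e.\<close>
definition KK_qc_on :: "real \<Rightarrow> real \<Rightarrow> complex set \<Rightarrow> (complex \<Rightarrow> complex) \<Rightarrow> bool" where
  "KK_qc_on K K' D w \<longleftrightarrow> K \<ge> 1 \<and> K' \<ge> 0 \<and> ACL_on D w \<and>
     (AE z in lebesgue. z \<in> D \<longrightarrow>
        (\<exists>wx wy. partials_at w z wx wy \<and> jac wx wy \<ge> 0 \<and>
           (norm wx)\<^sup>2 + (norm wy)\<^sup>2 \<le> 2 * K * jac wx wy + K'))"

definition C2_jordan_curve :: "(real \<Rightarrow> complex) \<Rightarrow> bool" where
  "C2_jordan_curve g \<longleftrightarrow> (\<forall>t. g (t + 1) = g t) \<and> simple_path g \<and>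
     (\<exists>g' g''. continuous_on UNIV g'' \<and>
        (\<forall>t. (g has_vector_derivative g' t) (at t) \<and>
             (g' has_vector_derivative g'' t) (at t) \<and> g' t \<noteq> 0))"

definition curvature :: "(real \<Rightarrow> complex) \<Rightarrow> real \<Rightarrow> real" where
  "curvature g t =
     (let g1 = vector_derivative g (at t);
          g2 = vector_derivative (\<lambda>s. vector_derivative g (at s)) (at t)
      in Im (cnj g1 * g2) / norm g1 ^ 3)"

end

theory Submission
  imports Defs
begin


lemma cone_negligible:
  fixes S :: "complex set" and e :: complex
  assumes e: "e \<noteq> 0"
    and cone: "\<And>x y. x \<in> S \<Longrightarrow> y \<in> S \<Longrightarrow> \<bar>e \<bullet> (x - y)\<bar> \<le> (1/2) * norm e * norm (x - y)"
  shows "negligible S"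
proof -
  define proj where "proj x = x - ((e \<bullet> x) / (norm e)^2) *\<^sub>R e" for x
  have ne: "(norm e)^2 > 0" using e by simp
  have pd: "proj x - proj y = (x - y) - ((e \<bullet> (x - y)) / (norm e)^2) *\<^sub>R e" for x y
    by (simp add: proj_def inner_diff_right diff_divide_distrib algebra_simps)
  have nrm: "(norm (d - ((e \<bullet> d) / (norm e)^2) *\<^sub>R e))^2 = (norm d)^2 - (e \<bullet> d)^2 / (norm e)^2" for d
  proof -
    define t where "t = (e \<bullet> d) / (norm e)^2"
    have ee: "e \<bullet> e = (norm e)^2" by (simp add: power2_norm_eq_inner)
    have "(norm (d - t *\<^sub>R e))^2 = d \<bullet> d - 2 * t * (e \<bullet> d) + t^2 * (e \<bullet> e)"
      unfolding power2_norm_eq_inner by (simp add: inner_diff_left inner_commute[of d e] algebra_simps power2_eq_square)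
    also have "\<dots> = (norm d)^2 - (e \<bullet> d)^2 / (norm e)^2"
      using ne unfolding ee t_def by (simp add: norm_eq_sqrt_inner field_simps power2_eq_square)
    finally show ?thesis by (simp add: t_def)
  qed
  have aux: "\<And>a n q::real. a \<le> 1/4*n \<Longrightarrow> q = 4*(n - a) \<Longrightarrow> 0 \<le> n \<Longrightarrow> n \<le> q" by (simp add: field_simps)
  have lip: "norm (x - y) \<le> 2 * norm (proj x - proj y)" if "x \<in> S" "y \<in> S" for x y
  proof -
    have c: "(e \<bullet> (x - y))^2 \<le> (1/4) * (norm e)^2 * (norm (x-y))^2"
    proof -
      have "(e \<bullet> (x - y))^2 = \<bar>e \<bullet> (x - y)\<bar>^2" by simp
      also have "\<dots> \<le> ((1/2) * norm e * norm (x - y))^2"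
        by (rule power_mono[OF cone[OF that]]) simp
      finally show ?thesis by (simp add: power_mult_distrib power_divide)
    qed
    have "(e \<bullet> (x - y))^2 / (norm e)^2 \<le> (1/4) * (norm (x-y))^2"
      using c ne by (simp add: divide_le_eq algebra_simps)
    moreover have "(2 * norm (proj x - proj y))^2 = 4 * ((norm (x-y))^2 - (e \<bullet> (x - y))^2 / (norm e)^2)"
      using nrm[of "x - y"] pd[of x y] by (simp add: power_mult_distrib)
    moreover have "0 \<le> (norm (x-y))^2" by simp
    ultimately have "(norm (x-y))^2 \<le> (2 * norm (proj x - proj y))^2" 
      by (rule aux)
    then show ?thesis by (rule power2_le_imp_le) simp
  qed
  have inj: "inj_on proj S"
  proof (rule inj_onI)
    fix x y assume "x \<in> S" "y \<in> S" "proj x = proj y"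
    then have "norm (x - y) \<le> 0" using lip[of x y] by simp
    then show "x = y" by simp
  qed
  define f where "f = inv_into S proj"
  have "negligible (f ` (proj ` S))"
  proof (rule negligible_locally_Lipschitz_image)
    show "DIM(complex) \<le> DIM(complex)" by simp
    show "negligible (proj ` S)"
    proof (rule negligible_subset[OF negligible_hyperplane[of e 0]])
      show "proj ` S \<subseteq> {x. e \<bullet> x = 0}"
        using ne by (auto simp: proj_def inner_diff_right power2_norm_eq_inner)
    qed (use e in auto)
    fix y assume "y \<in> proj ` S"
    then obtain x where x: "x \<in> S" "y = proj x" by auto
    show "\<exists>T B. open T \<and> y \<in> T \<and> (\<forall>z\<in>proj ` S \<inter> T. norm (f z - f y) \<le> B * norm (z - y))"
    proof (intro exI conjI ballI)
      show "open UNIV" by simp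
      show "y \<in> UNIV" by simp
      fix z assume "z \<in> proj ` S \<inter> UNIV"
      then obtain x' where x': "x' \<in> S" "z = proj x'" by auto
      show "norm (f z - f y) \<le> 2 * norm (z - y)"
        using lip[OF x'(1) x(1)] x x' inj by (simp add: f_def)
    qed
  qed
  moreover have "f ` (proj ` S) = S" using inj by (simp add: f_def)
  ultimately show ?thesis by simp
qed



definition subgrad :: "(complex \<Rightarrow> real) \<Rightarrow> complex \<Rightarrow> complex \<Rightarrow> bool" where
  "subgrad f z g \<longleftrightarrow> (\<forall>\<epsilon>>0. \<exists>r>0. \<forall>u. norm (u - z) < r \<longrightarrow> f z + g \<bullet> (u - z) - \<epsilon> * norm (u - z) \<le> f u)"

definition piece :: "(complex \<Rightarrow> real) \<Rightarrow> nat \<times> nat \<times> complex \<times> complex \<times> complex \<Rightarrow> complex set" where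
  "piece f = (\<lambda>(m,n,q1,q2,c). {z \<in> ball c (1 / (2 * real (Suc n))). \<exists>g1 g2.
      norm (g1 - q1) < 1 / real (Suc m) \<and> norm (g2 - q2) < 1 / real (Suc m) \<and>
      (\<forall>u. norm (u - z) < 1 / real (Suc n) \<longrightarrow>
          f z + g1 \<bullet> (u - z) - (1 / real (Suc m)) * norm (u - z) \<le> f u \<and>
          f z + g2 \<bullet> (u - z) - (1 / real (Suc m)) * norm (u - z) \<le> f u)})"

lemma piece_negligible:
  assumes "8 / real (Suc m) < norm (q1 - q2)"
  shows "negligible (piece f (m,n,q1,q2,c))"
proof (rule cone_negligible[where e = "q1 - q2"])
  show "q1 - q2 \<noteq> 0" using assms by auto
  define \<delta> where "\<delta> = 1 / real (Suc m)"
  have \<delta>: "\<delta> > 0" by (simp add: \<delta>_def)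
  fix x y assume x: "x \<in> piece f (m,n,q1,q2,c)" and y: "y \<in> piece f (m,n,q1,q2,c)"
  from x obtain g1 g2 where xb: "x \<in> ball c (1 / (2 * real (Suc n)))"
    and g: "norm (g1 - q1) < \<delta>" "norm (g2 - q2) < \<delta>"
    and gx: "\<And>u. norm (u - x) < 1 / real (Suc n) \<Longrightarrow>
          f x + g1 \<bullet> (u - x) - \<delta> * norm (u - x) \<le> f u \<and>
          f x + g2 \<bullet> (u - x) - \<delta> * norm (u - x) \<le> f u"
    unfolding piece_def \<delta>_def by auto
  from y obtain h1 h2 where yb: "y \<in> ball c (1 / (2 * real (Suc n)))"
    and h: "norm (h1 - q1) < \<delta>" "norm (h2 - q2) < \<delta>"
    and hy: "\<And>u. norm (u - y) < 1 / real (Suc n) \<Longrightarrow>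
          f y + h1 \<bullet> (u - y) - \<delta> * norm (u - y) \<le> f u \<and>
          f y + h2 \<bullet> (u - y) - \<delta> * norm (u - y) \<le> f u"
    unfolding piece_def \<delta>_def by auto
  define d where "d = y - x"
  have nd: "norm (x - y) = norm d" "norm (y - x) = norm d" by (auto simp: d_def norm_minus_commute)
  have "norm (y - x) \<le> dist c x + dist c y"
    by (metis dist_commute dist_norm dist_triangle)
  also have "\<dots> < 1 / (2 * real (Suc n)) + 1 / (2 * real (Suc n))" using xb yb by (intro add_strict_mono) auto
  also have "\<dots> = 1 / real (Suc n)" by (simp add: field_simps)
  finally have close: "norm (y - x) < 1 / real (Suc n)" "norm (x - y) < 1 / real (Suc n)"
    by (auto simp: norm_minus_commute)
  have A: "f x + g1 \<bullet> d - \<delta> * norm d \<le> f y" "f x + g2 \<bullet> d - \<delta> * norm d \<le> f y"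
    using gx[OF close(1)] unfolding d_def by blast+
  have xy: "x - y = - d" by (simp add: d_def)
  have B: "f y - h1 \<bullet> d - \<delta> * norm d \<le> f x" "f y - h2 \<bullet> d - \<delta> * norm d \<le> f x"
    using hy[OF close(2)] unfolding xy by (simp_all add: inner_minus_right)
  have cs: "\<bar>(a - b) \<bullet> d\<bar> \<le> \<delta> * norm d" if "norm (a - b) < \<delta>" for a b
  proof -
    have "\<bar>(a - b) \<bullet> d\<bar> \<le> norm (a - b) * norm d" by (rule Cauchy_Schwarz_ineq2)
    also have "\<dots> \<le> \<delta> * norm d" using that by (intro mult_right_mono) auto
    finally show ?thesis .
  qed
  have e1: "\<bar>g1 \<bullet> d - q1 \<bullet> d\<bar> \<le> \<delta> * norm d" using cs[OF g(1)] by (simp add: inner_diff_left)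
  have e2: "\<bar>g2 \<bullet> d - q2 \<bullet> d\<bar> \<le> \<delta> * norm d" using cs[OF g(2)] by (simp add: inner_diff_left)
  have e3: "\<bar>h1 \<bullet> d - q1 \<bullet> d\<bar> \<le> \<delta> * norm d" using cs[OF h(1)] by (simp add: inner_diff_left)
  have e4: "\<bar>h2 \<bullet> d - q2 \<bullet> d\<bar> \<le> \<delta> * norm d" using cs[OF h(2)] by (simp add: inner_diff_left)
  have "\<bar>(q1 - q2) \<bullet> d\<bar> \<le> 4 * \<delta> * norm d"
  proof -
    have s1: "g1 \<bullet> d - h2 \<bullet> d \<le> 2 * \<delta> * norm d" using A(1) B(2) by linarith
    have s2: "g2 \<bullet> d - h1 \<bullet> d \<le> 2 * \<delta> * norm d" using A(2) B(1) by linarith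
    have "q1 \<bullet> d - q2 \<bullet> d \<le> 4 * \<delta> * norm d" using s1 e1 e4 unfolding abs_le_iff by linarith
    moreover have "q2 \<bullet> d - q1 \<bullet> d \<le> 4 * \<delta> * norm d" using s2 e2 e3 unfolding abs_le_iff by linarith
    ultimately show ?thesis by (simp add: inner_diff_left abs_le_iff)
  qed
  also have "\<dots> \<le> (1/2) * norm (q1 - q2) * norm d"
    using assms by (intro mult_right_mono) (auto simp: \<delta>_def)
  finally show "\<bar>(q1 - q2) \<bullet> (x - y)\<bar> \<le> 1 / 2 * norm (q1 - q2) * norm (x - y)"
    using nd xy by (simp add: inner_minus_right)
qed


lemma two_subgrad_negligible:
  "negligible {z. \<exists>g1 g2. g1 \<noteq> g2 \<and> subgrad f z g1 \<and> subgrad f z g2}"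
proof -
  obtain Dn :: "complex set" where Dc: "countable Dn"
    and Dd: "\<And>U. open U \<Longrightarrow> U \<noteq> {} \<Longrightarrow> \<exists>y\<in>Dn. y \<in> U"
    by (rule countable_dense_setE) blast
  have near: "\<exists>q\<in>Dn. norm (q - x) < e" if "e > 0" for x :: complex and e :: real
  proof -
    have "ball x e \<noteq> {}" using that by simp
    then obtain q where "q \<in> Dn" "q \<in> ball x e" using Dd[of "ball x e"] by blast
    then show ?thesis by (auto simp: dist_norm norm_minus_commute)
  qed
  define I :: "(nat \<times> nat \<times> complex \<times> complex \<times> complex) set" where "I = {(m,n,q1,q2,c). q1 \<in> Dn \<and> q2 \<in> Dn \<and> c \<in> Dn \<and> 8 / real (Suc m) < norm (q1 - q2)}"
  have "countable (UNIV \<times> UNIV \<times> Dn \<times> Dn \<times> Dn :: (nat \<times> nat \<times> complex \<times> complex \<times> complex) set)"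
    using Dc by (intro countable_SIGMA) auto
  moreover have "I \<subseteq> UNIV \<times> UNIV \<times> Dn \<times> Dn \<times> Dn" by (auto simp: I_def)
  ultimately have cI: "countable I" by (rule countable_subset[rotated])
  have neg: "negligible (\<Union> (piece f ` I))"
  proof (rule negligible_countable_Union)
    show "countable (piece f ` I)" using cI by simp
    fix S assume "S \<in> piece f ` I"
    then obtain m n q1 q2 c where "S = piece f (m,n,q1,q2,c)" "(m,n,q1,q2,c) \<in> I" by auto
    then show "negligible S" using piece_negligible by (auto simp: I_def)
  qed
  show ?thesis
  proof (rule negligible_subset[OF neg], safe)
    fix z g1 g2 assume ne: "g1 \<noteq> g2" and s1: "subgrad f z g1" and s2: "subgrad f z g2"
    define s where "s = norm (g1 - g2)"
    have sp: "s > 0" using ne by (simp add: s_def)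
    obtain m :: nat where m: "10 / s < real m" using reals_Archimedean2 by blast
    define \<delta> where "\<delta> = 1 / real (Suc m)"
    have \<delta>: "\<delta> > 0" by (simp add: \<delta>_def)
    have "10 / s < real (Suc m)" using m by simp
    then have s10: "10 * \<delta> < s" using sp by (simp add: \<delta>_def field_simps)
    obtain q1 where q1: "q1 \<in> Dn" "norm (q1 - g1) < \<delta>" using near[OF \<delta>] by blast
    obtain q2 where q2: "q2 \<in> Dn" "norm (q2 - g2) < \<delta>" using near[OF \<delta>] by blast
    have t1: "norm (g1 - g2) \<le> norm (g1 - q1) + norm ((q1 - q2) + (q2 - g2))"
      using norm_triangle_ineq[of "g1-q1" "(q1 - q2) + (q2 - g2)"] by simp
    have t2: "norm ((q1 - q2) + (q2 - g2)) \<le> norm (q1-q2) + norm(q2 - g2)" by (rule norm_triangle_ineq)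
    have "s \<le> norm (q1 - g1) + norm (q1 - q2) + norm (q2 - g2)"
      using t1 t2 unfolding s_def by (simp add: norm_minus_commute[of g1 q1])
    then have q12: "8 / real (Suc m) < norm (q1 - q2)" using q1 q2 s10 by (simp add: \<delta>_def)
    obtain r1 where r1: "r1 > 0" "\<And>u. norm (u - z) < r1 \<Longrightarrow> f z + g1 \<bullet> (u - z) - \<delta> * norm (u - z) \<le> f u"
      using s1 \<delta> unfolding subgrad_def by blast
    obtain r2 where r2: "r2 > 0" "\<And>u. norm (u - z) < r2 \<Longrightarrow> f z + g2 \<bullet> (u - z) - \<delta> * norm (u - z) \<le> f u"
      using s2 \<delta> unfolding subgrad_def by blast
    obtain n :: nat where n: "inverse (real (Suc n)) < min r1 r2" using reals_Archimedean r1 r2 by (metis min_less_iff_conj)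
    have hp: "1 / (2 * real (Suc n)) > 0" by simp
    obtain c where c: "c \<in> Dn" "norm (c - z) < 1 / (2 * real (Suc n))" using near[OF hp] by blast
    have "z \<in> piece f (m,n,q1,q2,c)"
      unfolding piece_def
    proof (simp only: prod.case, intro CollectI conjI exI allI impI)
      show "z \<in> ball c (1 / (2 * real (Suc n)))" using c by (simp add: dist_norm)
      show "norm (g1 - q1) < 1 / real (Suc m)" using q1 by (simp add: \<delta>_def norm_minus_commute)
      show "norm (g2 - q2) < 1 / real (Suc m)" using q2 by (simp add: \<delta>_def norm_minus_commute)
      fix u assume "norm (u - z) < 1 / real (Suc n)"
      then have "norm (u - z) < r1" "norm (u - z) < r2" using n by (auto simp: inverse_eq_divide)
      then show "f z + g1 \<bullet> (u - z) - 1 / real (Suc m) * norm (u - z) \<le> f u"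
        "f z + g2 \<bullet> (u - z) - 1 / real (Suc m) * norm (u - z) \<le> f u"
        using r1 r2 by (auto simp: \<delta>_def)
    qed
    moreover have "(m,n,q1,q2,c) \<in> I" using q1 q2 c q12 by (simp add: I_def)
    ultimately show "z \<in> \<Union> (piece f ` I)" by blast
  qed
qed



lemma lin_decomp:
  assumes "linear A"
  shows "A h = Re h *\<^sub>R A 1 + Im h *\<^sub>R A \<i>"
proof -
  have "h = Re h *\<^sub>R 1 + Im h *\<^sub>R \<i>" by (simp add: complex_eq_iff)
  then have "A h = A (Re h *\<^sub>R 1 + Im h *\<^sub>R \<i>)" by simp
  also have "\<dots> = Re h *\<^sub>R A 1 + Im h *\<^sub>R A \<i>"
    using assms by (simp add: linear_add linear_scale)
  finally show ?thesis .
qed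

lemma inner_lin:
  assumes "linear A"
  shows "p \<bullet> A h = Re h * (p \<bullet> A 1) + Im h * (p \<bullet> A \<i>)"
  using lin_decomp[OF assms, of h] by (simp add: inner_add_right)

lemma cs2: "(x*a + y*b)^2 \<le> (x^2+y^2)*(a^2+b^2::real)"
proof -
  have "0 \<le> (x*b - y*a)^2" by simp
  then show ?thesis by (simp add: power2_eq_square algebra_simps)
qed

lemma sq_bound: "0 \<le> m \<Longrightarrow> s \<ge> 0 \<Longrightarrow> m * sqrt s \<ge> s \<Longrightarrow> m^2 \<ge> (s::real)"
proof -
  assume m: "0 \<le> m" and s: "s \<ge> 0" and h: "m * sqrt s \<ge> s"
  show "m^2 \<ge> s"
  proof (cases "s = 0")
    case True then show ?thesis by simp
  next
    case False
    then have sp: "sqrt s > 0" using s by simp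
    have "sqrt s * sqrt s = s" using s by simp
    then have "m * sqrt s \<ge> sqrt s * sqrt s" using h by simp
    then have "m \<ge> sqrt s" using sp by (metis mult_right_le_imp_le)
    then have "m^2 \<ge> (sqrt s)^2" using sp by (intro power_mono) auto
    then show ?thesis using s by simp
  qed
qed

lemma qc_bounds:
  fixes A :: "complex \<Rightarrow> complex" and p :: complex and K K' :: real
  assumes A: "bounded_linear A" and p: "norm p = 1" and K: "K \<ge> 0" and K': "K' \<ge> 0"
    and qc: "(norm (A 1))\<^sup>2 + (norm (A \<i>))\<^sup>2 \<le> 2 * K * Im (cnj (A 1) * A \<i>) + K'"
  defines "L \<equiv> (\<lambda>h. - (p \<bullet> A h))"
  shows "bounded_linear L" "onorm L \<le> onorm A" "onorm A \<le> 2 * K * onorm L + sqrt K'"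
proof -
  have lA: "linear A" using A bounded_linear.linear by blast
  show bL: "bounded_linear L" unfolding L_def
    by (intro bounded_linear_minus bounded_linear_compose[OF bounded_linear_inner_right A])
  have nAh: "norm (A h) \<le> onorm A * norm h" for h by (rule onorm[OF A])
  show "onorm L \<le> onorm A"
  proof (rule onorm_le)
    fix h
    have "norm (L h) = \<bar>p \<bullet> A h\<bar>" by (simp add: L_def)
    also have "\<dots> \<le> norm p * norm (A h)" by (rule Cauchy_Schwarz_ineq2)
    also have "\<dots> \<le> onorm A * norm h" using nAh p by simp
    finally show "norm (L h) \<le> onorm A * norm h" .
  qed
  define a where "a = A 1"
  define b where "b = A \<i>"
  define q where "q = \<i> * p"
  define \<sigma> where "\<sigma> = onorm A"
  define m where "m = onorm L"
  have \<sigma>0: "\<sigma> \<ge> 0" unfolding \<sigma>_def by (rule onorm_pos_le[OF A])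
  have m0: "m \<ge> 0" unfolding m_def by (rule onorm_pos_le[OF bL])
  have q: "norm q = 1" using p by (simp add: q_def norm_mult)
  define \<alpha> where "\<alpha> = p \<bullet> a"
  define \<beta> where "\<beta> = p \<bullet> b"
  define \<gamma> where "\<gamma> = q \<bullet> a"
  define \<delta> where "\<delta> = q \<bullet> b"
  have pn: "(Re p)^2 + (Im p)^2 = 1" using p by (simp add: cmod_def)
  have J: "Im (cnj a * b) = \<alpha> * \<delta> - \<gamma> * \<beta>"
  proof -
    have "\<alpha> * \<delta> - \<gamma> * \<beta> = Im (cnj a * b) * ((Re p)^2 + (Im p)^2)"
      by (simp add: \<alpha>_def \<beta>_def \<gamma>_def \<delta>_def q_def inner_complex_def algebra_simps power2_eq_square)
    then show ?thesis using pn by simp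
  qed
  have sig: "\<sigma>^2 \<le> (norm a)^2 + (norm b)^2"
  proof -
    have "\<sigma> \<le> sqrt ((norm a)^2 + (norm b)^2)"
      unfolding \<sigma>_def
    proof (rule onorm_le)
      fix h
      have "norm (A h) = norm (Re h *\<^sub>R a + Im h *\<^sub>R b)" using lin_decomp[OF lA, of h] by (simp add: a_def b_def)
      also have "\<dots> \<le> \<bar>Re h\<bar> * norm a + \<bar>Im h\<bar> * norm b"
        by (metis norm_scaleR norm_triangle_ineq)
      also have "\<dots> \<le> sqrt ((Re h)^2 + (Im h)^2) * sqrt ((norm a)^2 + (norm b)^2)"
      proof -
        have "(\<bar>Re h\<bar> * norm a + \<bar>Im h\<bar> * norm b)^2 \<le> ((Re h)^2 + (Im h)^2) * ((norm a)^2 + (norm b)^2)"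
          using cs2[of "\<bar>Re h\<bar>" "norm a" "\<bar>Im h\<bar>" "norm b"] by simp
        then have "\<bar>Re h\<bar> * norm a + \<bar>Im h\<bar> * norm b \<le> sqrt (((Re h)^2 + (Im h)^2) * ((norm a)^2 + (norm b)^2))"
          using real_le_rsqrt by blast
        then show ?thesis by (simp add: real_sqrt_mult)
      qed
      also have "\<dots> = sqrt ((norm a)^2 + (norm b)^2) * norm h" by (simp add: cmod_def)
      finally show "norm (A h) \<le> sqrt ((norm a)^2 + (norm b)^2) * norm h" .
    qed
    then have "\<sigma>^2 \<le> (sqrt ((norm a)^2 + (norm b)^2))^2" using \<sigma>0 by (intro power_mono) auto
    then show ?thesis by simp
  qed
  have mab: "m^2 \<ge> \<alpha>^2 + \<beta>^2"
  proof (rule sq_bound[OF m0])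
    show "0 \<le> \<alpha>^2 + \<beta>^2" by simp
    define h where "h = Complex \<alpha> \<beta>"
    have nh: "norm h = sqrt (\<alpha>^2 + \<beta>^2)" by (simp add: h_def cmod_def)
    have "L h = - (\<alpha>^2 + \<beta>^2)" unfolding L_def using inner_lin[OF lA, of p h]
      by (simp add: h_def \<alpha>_def \<beta>_def a_def b_def power2_eq_square)
    then have "\<alpha>^2 + \<beta>^2 = norm (L h)" by simp
    also have "\<dots> \<le> m * norm h" unfolding m_def by (rule onorm[OF bL])
    finally show "\<alpha>^2 + \<beta>^2 \<le> m * sqrt (\<alpha>^2 + \<beta>^2)" using nh by simp
  qed
  have sgd: "\<sigma>^2 \<ge> \<gamma>^2 + \<delta>^2"
  proof (rule sq_bound[OF \<sigma>0])
    show "0 \<le> \<gamma>^2 + \<delta>^2" by simp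
    define h where "h = Complex \<gamma> \<delta>"
    have nh: "norm h = sqrt (\<gamma>^2 + \<delta>^2)" by (simp add: h_def cmod_def)
    have "q \<bullet> A h = \<gamma>^2 + \<delta>^2" using inner_lin[OF lA, of q h]
      by (simp add: h_def \<gamma>_def \<delta>_def a_def b_def power2_eq_square)
    then have "\<gamma>^2 + \<delta>^2 \<le> norm q * norm (A h)"
      by (metis Cauchy_Schwarz_ineq2 abs_le_D1)
    also have "\<dots> \<le> \<sigma> * norm h" using q nAh by (simp add: \<sigma>_def)
    finally show "\<gamma>^2 + \<delta>^2 \<le> \<sigma> * sqrt (\<gamma>^2 + \<delta>^2)" using nh by simp
  qed
  have Jb: "Im (cnj a * b) \<le> m * \<sigma>"
  proof -
    have "(\<alpha> * \<delta> - \<gamma> * \<beta>)^2 \<le> (\<alpha>^2 + \<beta>^2) * (\<gamma>^2 + \<delta>^2)"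
    proof -
      have "0 \<le> (\<alpha> * \<gamma> + \<beta> * \<delta>)^2" by simp
      then show ?thesis by (simp add: power2_eq_square algebra_simps)
    qed
    also have "\<dots> \<le> m^2 * \<sigma>^2" using mab sgd by (intro mult_mono) auto
    also have "\<dots> = (m * \<sigma>)^2" by (simp add: power_mult_distrib)
    finally have "\<bar>\<alpha> * \<delta> - \<gamma> * \<beta>\<bar> \<le> \<bar>m * \<sigma>\<bar>" by (simp only: abs_le_square_iff)
    then have "\<bar>\<alpha> * \<delta> - \<gamma> * \<beta>\<bar> \<le> m * \<sigma>" using m0 \<sigma>0 by simp
    then show ?thesis using J by linarith
  qed
  have key: "\<sigma>^2 \<le> 2 * K * m * \<sigma> + K'"
  proof -
    have "\<sigma>^2 \<le> 2 * K * Im (cnj a * b) + K'" using sig qc by (simp add: a_def b_def)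
    also have "\<dots> \<le> 2 * K * (m * \<sigma>) + K'" using Jb K by (intro add_right_mono mult_left_mono) auto
    finally show ?thesis by (simp add: algebra_simps)
  qed
  show "onorm A \<le> 2 * K * onorm L + sqrt K'"
  proof (rule ccontr)
    assume "\<not> ?thesis"
    then have gt: "\<sigma> > 2 * K * m + sqrt K'" by (simp add: \<sigma>_def m_def)
    have sK: "sqrt K' \<ge> 0" using K' by simp
    have "\<sigma> \<ge> sqrt K'" using gt K m0 sK by (smt (verit) mult_nonneg_nonneg)
    then have "\<sigma> * sqrt K' \<ge> sqrt K' * sqrt K'" using sK by (intro mult_right_mono) auto
    then have s1: "\<sigma> * sqrt K' \<ge> K'" using K' by simp
    have KM: "2 * K * m \<ge> 0" using K m0 by simp
    have "\<sigma> > 0" using gt KM sK by linarith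
    then have "\<sigma> * \<sigma> > \<sigma> * (2 * K * m + sqrt K')" using gt sK K m0
      by (intro mult_strict_left_mono) (auto intro!: add_nonneg_nonneg mult_nonneg_nonneg)
    then have "\<sigma>^2 > 2 * K * m * \<sigma> + \<sigma> * sqrt K'" by (simp add: power2_eq_square algebra_simps)
    then show False using key s1 by linarith
  qed
qed



lemma inner_neg_complex:
  assumes "linear A"
  shows "(- Complex (p \<bullet> A 1) (p \<bullet> A \<i>)) \<bullet> h = - (p \<bullet> A h)"
  using inner_lin[OF assms, of p h] by (simp add: inner_complex_def algebra_simps)

lemma nearest_subgrad:
  fixes w :: "complex \<Rightarrow> complex" and F :: "complex set"
  assumes wd: "(w has_derivative A) (at z)" and \<zeta>: "\<zeta> \<in> F"
    and near: "dist (w z) \<zeta> = infdist (w z) F" and ne: "w z \<noteq> \<zeta>"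
  shows "subgrad (\<lambda>u. - infdist (w u) F) z (- Complex (sgn (w z - \<zeta>) \<bullet> A 1) (sgn (w z - \<zeta>) \<bullet> A \<i>))"
proof -
  define p where "p = sgn (w z - \<zeta>)"
  have lA: "linear A" using wd has_derivative_bounded_linear bounded_linear.linear by blast
  have d1: "((\<lambda>u. w u - \<zeta>) has_derivative A) (at z)"
    using has_derivative_diff[OF wd has_derivative_const[of \<zeta>]] by simp
  have d2: "(norm has_derivative (\<lambda>h. h \<bullet> p)) (at (w z - \<zeta>))"
    unfolding p_def using has_derivative_norm[of "w z - \<zeta>"] ne by simp
  have dpsi: "((\<lambda>u. norm (w u - \<zeta>)) has_derivative (\<lambda>h. A h \<bullet> p)) (at z)"
    using has_derivative_compose[OF d1 d2] by simp
  show ?thesis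
    unfolding subgrad_def p_def[symmetric]
  proof (intro allI impI)
    fix \<epsilon> :: real assume \<epsilon>: "\<epsilon> > 0"
    obtain r where r: "r > 0" "\<And>u. norm (u - z) < r \<Longrightarrow>
        norm (norm (w u - \<zeta>) - norm (w z - \<zeta>) - A (u - z) \<bullet> p) \<le> \<epsilon> * norm (u - z)"
      using dpsi \<epsilon> unfolding has_derivative_at_alt by blast
    show "\<exists>r>0. \<forall>u. norm (u - z) < r \<longrightarrow>
        - infdist (w z) F + (- Complex (p \<bullet> A 1) (p \<bullet> A \<i>)) \<bullet> (u - z) - \<epsilon> * norm (u - z) \<le> - infdist (w u) F"
    proof (intro exI conjI allI impI)
      show "r > 0" by fact
      fix u assume u: "norm (u - z) < r"
      have i1: "infdist (w u) F \<le> norm (w u - \<zeta>)" using infdist_le[OF \<zeta>, of "w u"] by (simp add: dist_norm)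
      have i2: "infdist (w z) F = norm (w z - \<zeta>)" using near by (simp add: dist_norm)
      have i3: "norm (w u - \<zeta>) - norm (w z - \<zeta>) - A (u - z) \<bullet> p \<le> \<epsilon> * norm (u - z)"
        using r(2)[OF u] by simp
      have i4: "(- Complex (p \<bullet> A 1) (p \<bullet> A \<i>)) \<bullet> (u - z) = - (A (u - z) \<bullet> p)"
        using inner_neg_complex[OF lA, of p "u - z"] by (simp add: inner_commute)
      show "- infdist (w z) F + (- Complex (p \<bullet> A 1) (p \<bullet> A \<i>)) \<bullet> (u - z) - \<epsilon> * norm (u - z) \<le> - infdist (w u) F"
        using i1 i2 i3 i4 by linarith
    qed
  qed
qed



lemma danskin_upper:
  fixes w :: "complex \<Rightarrow> complex" and F :: "complex set"
  assumes wd: "(w has_derivative A) (at z)" and F: "compact F" "F \<noteq> {}" and c: "w z \<notin> F"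
    and all: "\<And>\<zeta> h. \<zeta> \<in> F \<Longrightarrow> dist (w z) \<zeta> = infdist (w z) F \<Longrightarrow> sgn (w z - \<zeta>) \<bullet> A h = - (g0 \<bullet> h)"
    and \<epsilon>: "\<epsilon> > 0"
  shows "\<exists>r>0. \<forall>u. norm (u - z) < r \<longrightarrow> - infdist (w u) F \<le> - infdist (w z) F + g0 \<bullet> (u - z) + \<epsilon> * norm (u - z)"
proof (rule ccontr)
  assume "\<not> ?thesis"
  then have bad: "\<forall>r>0. \<exists>u. norm (u - z) < r \<and> - infdist (w u) F > - infdist (w z) F + g0 \<bullet> (u - z) + \<epsilon> * norm (u - z)"
    by (auto simp: not_le)
  have "\<forall>k. \<exists>u. norm (u - z) < 1 / real (Suc k) \<and> - infdist (w u) F > - infdist (w z) F + g0 \<bullet> (u - z) + \<epsilon> * norm (u - z)"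
  proof
    fix k :: nat
    have "1 / real (Suc k) > 0" by simp
    then show "\<exists>u. norm (u - z) < 1 / real (Suc k) \<and> - infdist (w u) F > - infdist (w z) F + g0 \<bullet> (u - z) + \<epsilon> * norm (u - z)"
      using bad by blast
  qed
  then obtain U where U: "\<And>k. norm (U k - z) < 1 / real (Suc k)"
    "\<And>k. - infdist (w (U k)) F > - infdist (w z) F + g0 \<bullet> (U k - z) + \<epsilon> * norm (U k - z)"
    by metis
  have clF: "closed F" using F(1) compact_imp_closed by blast
  have "\<forall>k. \<exists>\<zeta>. \<zeta> \<in> F \<and> infdist (w (U k)) F = dist (w (U k)) \<zeta>"
    using infdist_attains_inf[OF clF F(2)] by metis
  then obtain Z where Z: "\<And>k. Z k \<in> F" "\<And>k. infdist (w (U k)) F = dist (w (U k)) (Z k)"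
    by metis
  obtain \<zeta>s \<phi> where \<zeta>s: "\<zeta>s \<in> F" and \<phi>: "strict_mono (\<phi> :: nat \<Rightarrow> nat)" and Zc: "(Z \<circ> \<phi>) \<longlonglongrightarrow> \<zeta>s"
    using seq_compactE[OF compact_imp_seq_compact[OF F(1)], of Z] Z(1) by blast
  have "(\<lambda>k. U k - z) \<longlonglongrightarrow> 0"
  proof (rule Lim_null_comparison)
    show "\<forall>\<^sub>F k in sequentially. norm (U k - z) \<le> inverse (real (Suc k))"
      using U(1) by (simp add: inverse_eq_divide less_imp_le)
    show "(\<lambda>k. inverse (real (Suc k))) \<longlonglongrightarrow> 0" by (rule LIMSEQ_inverse_real_of_nat)
  qed
  then have "U \<longlonglongrightarrow> z" by (rule LIM_zero_cancel)
  then have Uc: "(U \<circ> \<phi>) \<longlonglongrightarrow> z" using \<phi> by (rule LIMSEQ_subseq_LIMSEQ)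
  then have Unc: "(\<lambda>k. norm (U (\<phi> k) - z)) \<longlonglongrightarrow> 0"
    using tendsto_norm_zero[OF LIM_zero[OF Uc]] by (simp add: o_def)
  have cw: "isCont w z" using has_derivative_continuous[OF wd] .
  have wc: "(\<lambda>k. w (U (\<phi> k))) \<longlonglongrightarrow> w z"
    using isCont_tendsto_compose[OF cw Uc] by (simp add: o_def)
  have l1: "(\<lambda>k. infdist (w (U (\<phi> k))) F) \<longlonglongrightarrow> infdist (w z) F"
    by (rule tendsto_infdist[OF wc])
  have l2: "(\<lambda>k. infdist (w (U (\<phi> k))) F) \<longlonglongrightarrow> dist (w z) \<zeta>s"
    using tendsto_dist[OF wc Zc[unfolded o_def]] Z(2) by simp
  have near: "dist (w z) \<zeta>s = infdist (w z) F" using LIMSEQ_unique[OF l2 l1] .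
  have ps: "\<And>h. sgn (w z - \<zeta>s) \<bullet> A h = - (g0 \<bullet> h)" using all[OF \<zeta>s near] .
  have cne: "w z - \<zeta>s \<noteq> 0" using c \<zeta>s by auto
  define P where "P k = sgn (w z - Z (\<phi> k))" for k
  have Pc: "P \<longlonglongrightarrow> sgn (w z - \<zeta>s)"
    unfolding P_def by (intro tendsto_sgn tendsto_diff tendsto_const cne Zc[unfolded o_def])
  define B where "B = onorm A + 1"
  have bA: "bounded_linear A" using wd has_derivative_bounded_linear by blast
  have B: "B > 0" using onorm_pos_le[OF bA] by (simp add: B_def)
  have "(\<lambda>k. norm (P k - sgn (w z - \<zeta>s)) * B) \<longlonglongrightarrow> 0 * B"
    by (intro tendsto_mult tendsto_const tendsto_norm_zero LIM_zero Pc)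
  then have E1: "\<forall>\<^sub>F k in sequentially. norm (P k - sgn (w z - \<zeta>s)) * B < \<epsilon> / 2"
    using \<epsilon> by (intro order_tendstoD(2)) auto
  obtain r where r: "r > 0" "\<And>u. norm (u - z) < r \<Longrightarrow> norm (w u - w z - A (u - z)) \<le> (\<epsilon>/2) * norm (u - z)"
    using wd \<epsilon> unfolding has_derivative_at_alt by (meson half_gt_zero)
  have E2: "\<forall>\<^sub>F k in sequentially. norm (U (\<phi> k) - z) < r"
    using order_tendstoD(2)[OF Unc r(1)] .
  obtain k where k1: "norm (P k - sgn (w z - \<zeta>s)) * B < \<epsilon> / 2" and k2: "norm (U (\<phi> k) - z) < r"
    using eventually_happens'[OF sequentially_bot eventually_conj[OF E1 E2]] by blast
  define u where "u = U (\<phi> k)"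
  define \<zeta> where "\<zeta> = Z (\<phi> k)"
  define h where "h = u - z"
  define p where "p = P k"
  define ps where "ps = sgn (w z - \<zeta>s)"
  have \<zeta>F: "\<zeta> \<in> F" using Z(1) by (simp add: \<zeta>_def)
  have cz: "w z \<noteq> \<zeta>" using c \<zeta>F by auto
  have np: "norm p = 1" using cz by (simp add: p_def P_def \<zeta>_def norm_sgn)
  have a1: "infdist (w z) F \<le> norm (w z - \<zeta>)" using infdist_le[OF \<zeta>F, of "w z"] by (simp add: dist_norm)
  have a2: "infdist (w u) F = norm (w u - \<zeta>)" using Z(2)[of "\<phi> k"] by (simp add: u_def \<zeta>_def dist_norm)
  have a3: "p \<bullet> (w u - \<zeta>) \<le> norm (w u - \<zeta>)"
    using Cauchy_Schwarz_ineq2[of p "w u - \<zeta>"] np by simp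
  have a4: "p \<bullet> (w z - \<zeta>) = norm (w z - \<zeta>)"
    unfolding p_def P_def \<zeta>_def[symmetric] using cz by (simp add: sgn_div_norm inner_commute power2_norm_eq_inner[symmetric] power2_eq_square)
  have a5: "p \<bullet> (w u - \<zeta>) = p \<bullet> (w u - w z) + p \<bullet> (w z - \<zeta>)"
    by (simp add: inner_diff_right)
  define E where "E = w u - w z - A h"
  have a6: "p \<bullet> (w u - w z) = ps \<bullet> A h + (p - ps) \<bullet> A h + p \<bullet> E"
    by (simp add: E_def inner_diff_left inner_diff_right)
  have a7: "ps \<bullet> A h = - (g0 \<bullet> h)" using ps by (simp add: ps_def)
  have a8: "\<bar>(p - ps) \<bullet> A h\<bar> \<le> (\<epsilon>/2) * norm h"
  proof -
    have "\<bar>(p - ps) \<bullet> A h\<bar> \<le> norm (p - ps) * norm (A h)" by (rule Cauchy_Schwarz_ineq2)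
    also have "\<dots> \<le> norm (p - ps) * (B * norm h)"
    proof (intro mult_left_mono)
      have "norm (A h) \<le> onorm A * norm h" by (rule onorm[OF bA])
      also have "\<dots> \<le> B * norm h" by (intro mult_right_mono) (auto simp: B_def)
      finally show "norm (A h) \<le> B * norm h" .
    qed simp
    also have "\<dots> = (norm (p - ps) * B) * norm h" by simp
    also have "\<dots> \<le> (\<epsilon>/2) * norm h" using k1 by (intro mult_right_mono) (auto simp: p_def ps_def)
    finally show ?thesis .
  qed
  have a9: "\<bar>p \<bullet> E\<bar> \<le> (\<epsilon>/2) * norm h"
  proof -
    have "\<bar>p \<bullet> E\<bar> \<le> norm p * norm E" by (rule Cauchy_Schwarz_ineq2)
    also have "\<dots> \<le> (\<epsilon>/2) * norm h" using r(2)[OF k2] np by (simp add: E_def h_def u_def)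
    finally show ?thesis .
  qed
  have contra: "- infdist (w u) F > - infdist (w z) F + g0 \<bullet> h + \<epsilon> * norm h"
    using U(2)[of "\<phi> k"] by (simp add: u_def h_def)
  show False using a1 a2 a3 a4 a5 a6 a7 a8 a9 contra by (simp add: abs_le_iff)
qed



lemma partial_one:
  assumes wd: "(w has_derivative A) (at z)" and v: "\<And>t. q t = t *\<^sub>R v"
  shows "((\<lambda>t. w (z + q t)) has_vector_derivative A v) (at 0)"
proof -
  have lA: "linear A" using wd has_derivative_bounded_linear bounded_linear.linear by blast
  have d: "((\<lambda>t::real. z + t *\<^sub>R v) has_derivative (\<lambda>t. t *\<^sub>R v)) (at 0)"
    by (auto intro!: derivative_eq_intros)
  have wd': "(w has_derivative A) (at (z + 0 *\<^sub>R v))" using wd by simp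
  have "((\<lambda>t. w (z + t *\<^sub>R v)) has_derivative (\<lambda>t. A (t *\<^sub>R v))) (at 0)"
    by (rule has_derivative_compose[OF d wd'])
  then show ?thesis unfolding has_vector_derivative_def v
    using lA by (simp add: linear_scale)
qed

lemma partials_unique:
  assumes wd: "(w has_derivative A) (at z)" and p: "partials_at w z wx wy"
  shows "wx = A 1" "wy = A \<i>"
proof -
  have "((\<lambda>t. w (z + of_real t)) has_vector_derivative A 1) (at 0)"
    by (rule partial_one[OF wd]) (simp add: scaleR_conv_of_real)
  then show "wx = A 1" using p unfolding partials_at_def by (metis vector_derivative_unique_at)
  have "((\<lambda>t. w (z + \<i> * of_real t)) has_vector_derivative A \<i>) (at 0)"
    by (rule partial_one[OF wd]) (simp add: scaleR_conv_of_real mult.commute)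
  then show "wy = A \<i>" using p unfolding partials_at_def by (metis vector_derivative_unique_at)
qed

lemma pointwise:
  fixes w :: "complex \<Rightarrow> complex" and F :: "complex set"
  assumes wd: "(w has_derivative Dw) (at z)" and F: "compact F" "F \<noteq> {}" and c: "w z \<notin> F"
    and notbad: "z \<notin> {z. \<exists>g1 g2. g1 \<noteq> g2 \<and> subgrad (\<lambda>u. - infdist (w u) F) z g1 \<and> subgrad (\<lambda>u. - infdist (w u) F) z g2}"
    and part: "partials_at w z wx wy"
    and qc: "(norm wx)\<^sup>2 + (norm wy)\<^sup>2 \<le> 2 * K * jac wx wy + K'" and K: "K \<ge> 0" and K': "K' \<ge> 0"
  shows "\<exists>Dch. ((\<lambda>u. - infdist (w u) F) has_derivative Dch) (at z) \<and>
                  onorm Dch \<le> onorm Dw \<and> onorm Dw \<le> 2 * K * onorm Dch + sqrt K'"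
proof -
  define ch where "ch = (\<lambda>u. - infdist (w u) F)"
  have bA: "bounded_linear Dw" using wd has_derivative_bounded_linear by blast
  have lA: "linear Dw" using bA bounded_linear.linear by blast
  have clF: "closed F" using F(1) compact_imp_closed by blast
  obtain \<zeta>0 where \<zeta>0: "\<zeta>0 \<in> F" "infdist (w z) F = dist (w z) \<zeta>0"
    using infdist_attains_inf[OF clF F(2)] by metis
  define gz where "gz \<zeta> = - Complex (sgn (w z - \<zeta>) \<bullet> Dw 1) (sgn (w z - \<zeta>) \<bullet> Dw \<i>)" for \<zeta>
  have sg: "subgrad ch z (gz \<zeta>)" if "\<zeta> \<in> F" "dist (w z) \<zeta> = infdist (w z) F" for \<zeta>
    unfolding ch_def gz_def
    by (rule nearest_subgrad[OF wd that]) (use c that in auto)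
  define p0 where "p0 = sgn (w z - \<zeta>0)"
  define g0 where "g0 = gz \<zeta>0"
  have sub0: "subgrad ch z g0" unfolding g0_def using sg \<zeta>0 by simp
  have all: "sgn (w z - \<zeta>) \<bullet> Dw h = - (g0 \<bullet> h)" if "\<zeta> \<in> F" "dist (w z) \<zeta> = infdist (w z) F" for \<zeta> h
  proof -
    have "gz \<zeta> = g0"
    proof (rule ccontr)
      assume "gz \<zeta> \<noteq> g0"
      then show False using notbad sg[OF that] sub0 unfolding ch_def by blast
    qed
    then show ?thesis using inner_neg_complex[OF lA, of "sgn (w z - \<zeta>)" h] by (simp add: gz_def)
  qed
  have dchi: "(ch has_derivative (\<lambda>h. g0 \<bullet> h)) (at z)"
    unfolding has_derivative_at_alt
  proof (intro conjI allI impI)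
    show "bounded_linear ((\<bullet>) g0)" by (rule bounded_linear_inner_right)
    fix \<epsilon> :: real assume \<epsilon>: "\<epsilon> > 0"
    obtain r1 where r1: "r1 > 0" "\<And>u. norm (u - z) < r1 \<Longrightarrow> ch z + g0 \<bullet> (u - z) - \<epsilon> * norm (u - z) \<le> ch u"
      using sub0 \<epsilon> unfolding subgrad_def by blast
    obtain r2 where r2: "r2 > 0" "\<And>u. norm (u - z) < r2 \<Longrightarrow> ch u \<le> ch z + g0 \<bullet> (u - z) + \<epsilon> * norm (u - z)"
      using danskin_upper[OF wd F c all \<epsilon>] unfolding ch_def by blast
    show "\<exists>d>0. \<forall>y. norm (y - z) < d \<longrightarrow> norm (ch y - ch z - g0 \<bullet> (y - z)) \<le> \<epsilon> * norm (y - z)"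
    proof (intro exI conjI allI impI)
      show "min r1 r2 > 0" using r1 r2 by simp
      fix y assume "norm (y - z) < min r1 r2"
      then show "norm (ch y - ch z - g0 \<bullet> (y - z)) \<le> \<epsilon> * norm (y - z)"
        using r1(2)[of y] r2(2)[of y] by (simp add: abs_le_iff)
    qed
  qed
  have eqf: "(\<lambda>h. g0 \<bullet> h) = (\<lambda>h. - (p0 \<bullet> Dw h))"
    using inner_neg_complex[OF lA, of p0] by (simp add: g0_def gz_def p0_def)
  have np0: "norm p0 = 1" using c \<zeta>0 by (auto simp: p0_def norm_sgn)
  have wx: "wx = Dw 1" and wy: "wy = Dw \<i>" using partials_unique[OF wd part] by auto
  have qc': "(norm (Dw 1))\<^sup>2 + (norm (Dw \<i>))\<^sup>2 \<le> 2 * K * Im (cnj (Dw 1) * Dw \<i>) + K'"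
    using qc by (simp add: wx wy jac_def)
  note QB = qc_bounds[OF bA np0 K K' qc']
  show ?thesis
    using dchi QB(2,3) unfolding eqf ch_def by blast
qed



theorem lemma3p2:
  fixes \<gamma>1 \<gamma>2 :: "real \<Rightarrow> complex"
    and \<Omega>1 \<Omega>2 \<Omega> D :: "complex set"
    and w :: "complex \<Rightarrow> complex"
    and K K' \<kappa>0 \<mu> :: real
    and d1 :: "complex \<Rightarrow> real"
  assumes "C2_jordan_curve \<gamma>1" and "C2_jordan_curve \<gamma>2"
    and "\<Omega>1 = inside (path_image \<gamma>1)" and "\<Omega>2 = inside (path_image \<gamma>2)"
    and "closure \<Omega>2 \<subseteq> \<Omega>1"
    and "\<Omega> = \<Omega>1 - closure \<Omega>2"
    and "\<And>v. d1 v = infdist v (frontier \<Omega>1)"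
    and "\<kappa>0 = (SUP t\<in>{0..1}. \<bar>curvature \<gamma>1 t\<bar>)"
    and "0 < \<mu>" and "\<mu> < 1 / \<kappa>0"
    and "open D" and "connected D"
    and "w ` D \<subseteq> \<Omega>"
    and "KK_qc_on K K' D w"
  shows "AE z in lebesgue. z \<in> D \<and> w z \<in> {v \<in> \<Omega>. d1 v \<le> \<mu>} \<longrightarrow>
           (\<forall>Dw. (w has_derivative Dw) (at z) \<longrightarrow>
              (\<exists>D\<chi>. ((\<lambda>u. - d1 (w u)) has_derivative D\<chi>) (at z) \<and>
                  onorm D\<chi> \<le> onorm Dw \<and>
                  onorm Dw \<le> 2 * K * onorm D\<chi> + sqrt K'))"
proof -
  define F where "F = frontier \<Omega>1"
  have sp: "simple_path \<gamma>1" using assms(1) unfolding C2_jordan_curve_def by blast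
  then have cp: "compact (path_image \<gamma>1)" by (simp add: compact_path_image simple_path_imp_path)
  have bO: "bounded \<Omega>1" unfolding assms(3) by (rule bounded_inside[OF compact_imp_bounded[OF cp]])
  have oO: "open \<Omega>1" unfolding assms(3) by (rule open_inside[OF compact_imp_closed[OF cp]])
  have cF: "compact F" unfolding F_def using bO by blast
  have KK: "K \<ge> 1" "K' \<ge> 0" and qcAE: "AE z in lebesgue. z \<in> D \<longrightarrow>
        (\<exists>wx wy. partials_at w z wx wy \<and> jac wx wy \<ge> 0 \<and>
           (norm wx)\<^sup>2 + (norm wy)\<^sup>2 \<le> 2 * K * jac wx wy + K')"
    using assms(14) unfolding KK_qc_on_def by auto
  define N where "N = {z. \<exists>g1 g2. g1 \<noteq> g2 \<and> subgrad (\<lambda>u. - infdist (w u) F) z g1 \<and> subgrad (\<lambda>u. - infdist (w u) F) z g2}"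
  have "negligible N" unfolding N_def by (rule two_subgrad_negligible)
  then have NN: "N \<in> null_sets lebesgue" by (simp add: negligible_iff_null_sets)
  have d1eq: "(\<lambda>u. - d1 (w u)) = (\<lambda>u. - infdist (w u) F)" using assms(7) by (simp add: F_def)
  show ?thesis
    using AE_not_in[OF NN] qcAE
  proof eventually_elim
    case (elim z)
    show ?case
    proof (intro impI allI)
      assume zD: "z \<in> D \<and> w z \<in> {v \<in> \<Omega>. d1 v \<le> \<mu>}"
      fix Dw assume wd: "(w has_derivative Dw) (at z)"
      obtain wx wy where pw: "partials_at w z wx wy" and qc: "(norm wx)\<^sup>2 + (norm wy)\<^sup>2 \<le> 2 * K * jac wx wy + K'"
        using elim zD by blast
      have cO: "w z \<in> \<Omega>1" using zD assms(6) by auto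
      have cF': "w z \<notin> F" unfolding F_def using cO oO by (simp add: frontier_def interior_open)
      have Fne: "F \<noteq> {}"
      proof
        assume "F = {}"
        then have "\<Omega>1 = {} \<or> \<Omega>1 = UNIV" unfolding F_def by (simp add: frontier_eq_empty)
        then show False using cO bO not_bounded_UNIV by auto
      qed
      show "\<exists>D\<chi>. ((\<lambda>u. - d1 (w u)) has_derivative D\<chi>) (at z) \<and> onorm D\<chi> \<le> onorm Dw \<and> onorm Dw \<le> 2 * K * onorm D\<chi> + sqrt K'"
        unfolding d1eq
        by (rule pointwise[OF wd cF Fne cF' _ pw qc]) (use elim KK in \<open>auto simp: N_def\<close>)
    qed
  qed
qed


end
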